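(* Let $d\ge 1$, $p\ge 1$, $\lambda>0$, and let $\mathbf{x}=(x_1,\dots,x_n)$ and $\mathbf{x}'=(x'_1,\dots,x'_{n'})$ be two time series with values in $\mathbb{R}^d$, with $p<n$ and $p<n'$. Set $N=n+n'-2p$, and define $\mathbf{X}=[X\;X']\in\mathbb{R}^{pd\times N}$, $\mathbf{Y}=[Y\;Y']\in\mathbb{R}^{d\times N}$ and the $N\times N$ diagonal matrix $$\Delta=\operatorname{diag}\Big(\underbrace{\tfrac{1}{2(n-p)},\dots,\tfrac{1}{2(n-p)}}_{n-p\text{ times}},\underbrace{\tfrac{1}{2(n'-p)},\dots,\tfrac{1}{2(n'-p)}}_{n'-p\text{ times}}\Big),$$ where $X,Y,X',Y'$ are as described in the context. Define the autoregressive kernel of order $p$ and degrees of freedom $\lambda$ by $$k(\mathbf{x},\mathbf{x}')=\frac{1}{|\mathbf{X}\Delta\mathbf{X}^T+I_{pd}|^{\frac d2}\,\big|\mathbf{Y}\big(\Delta-\Delta\mathbf{X}^T(\mathbf{X}\Delta\mathbf{X}^T+I_{pd})^{-1}\mathbf{X}\Delta\big)\mathbf{Y}^T+I_d\big|^{\frac{1+\lambda}{2}}}.$$ Let $\alpha=\frac{1+\lambda}{d}$. Then $$k(\mathbf{x},\mathbf{x}')=\Big(|\mathbf{X}^T\mathbf{X}\Delta+I_N|^{1-\alpha}\,|\mathbf{X}^T\mathbf{X}\Delta+\mathbf{Y}^T\mathbf{Y}\Delta+I_N|^{\alpha}\Big)^{-\frac d2}.$$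
   Context: $|M|$ denotes the determinant of a square matrix $M$ and $I_m$ the $m\times m$ identity. For a time series $\mathbf{x}=(x_1,\dots,x_n)$ in $\mathbb{R}^d$ with $n>p$: $X\in\mathbb{R}^{pd\times(n-p)}$ is the matrix whose $i$-th column ($i=1,\dots,n-p$) is the stacked vector $(x_i;x_{i+1};\dots;x_{i+p-1})\in\mathbb{R}^{pd}$, and $Y\in\mathbb{R}^{d\times(n-p)}$ is the matrix whose $i$-th column is $x_{p+i}$, i.e. $Y=[x_{p+1},\dots,x_n]$. $X',Y'$ are defined in the same way from $\mathbf{x}'$ (with $n'-p$ columns). *)

theory Defs
  imports "Jordan_Normal_Form.Gauss_Jordan_Elimination" "Jordan_Normal_Form.Determinant"
begin

(* A time series x = (x_1,...,x_n) in R^d is a function nat => real vec, indexed from 1,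
   with dim_vec (x i) = d for 1 <= i <= n. *)

(* X in R^{pd x (n-p)}: column i (1-based, stored at 0-based column c = i-1) is the stacked
   vector (x_i; x_{i+1}; ...; x_{i+p-1}); row r is component (r mod d) of x_{i + r div d}. *)
definition lag_mat :: "nat \<Rightarrow> nat \<Rightarrow> nat \<Rightarrow> (nat \<Rightarrow> real vec) \<Rightarrow> real mat" where
  "lag_mat d p n x = mat (p * d) (n - p) (\<lambda>(r, c). x (c + 1 + r div d) $ (r mod d))"

definition resp_mat :: "nat \<Rightarrow> nat \<Rightarrow> nat \<Rightarrow> (nat \<Rightarrow> real vec) \<Rightarrow> real mat" where
  "resp_mat d p n x = mat d (n - p) (\<lambda>(r, c). x (p + 1 + c) $ r)"

definition hcat :: "real mat \<Rightarrow> real mat \<Rightarrow> real mat" where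
  "hcat A B = mat (dim_row A) (dim_col A + dim_col B)
     (\<lambda>(r, c). if c < dim_col A then A $$ (r, c) else B $$ (r, c - dim_col A))"

definition Delta_mat :: "nat \<Rightarrow> nat \<Rightarrow> nat \<Rightarrow> real mat" where
  "Delta_mat p n n' = mat_diag (n + n' - 2 * p)
     (\<lambda>j. if j < n - p then 1 / (2 * real (n - p)) else 1 / (2 * real (n' - p)))"

definition minv :: "real mat \<Rightarrow> real mat" where
  "minv A = (SOME B. B \<in> carrier_mat (dim_row A) (dim_row A) \<and>
                     A * B = 1\<^sub>m (dim_row A) \<and> B * A = 1\<^sub>m (dim_row A))"

definition ar_kernel :: "nat \<Rightarrow> nat \<Rightarrow> real \<Rightarrow> nat \<Rightarrow> (nat \<Rightarrow> real vec) \<Rightarrow> nat \<Rightarrow> (nat \<Rightarrow> real vec) \<Rightarrow> real" where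
  "ar_kernel d p lam n x n' x' =
    (let XX = hcat (lag_mat d p n x) (lag_mat d p n' x');
         YY = hcat (resp_mat d p n x) (resp_mat d p n' x');
         D = Delta_mat p n n';
         A = XX * D * transpose_mat XX + 1\<^sub>m (p * d)
     in 1 / (det A powr (real d / 2) *
             det (YY * (D - D * transpose_mat XX * minv A * XX * D) * transpose_mat YY + 1\<^sub>m d)
               powr ((1 + lam) / 2)))"

end

theory Submission
  imports Defs
begin

lemma sylvester_det:
  fixes U V :: "'a::idom mat"
  assumes U: "U \<in> carrier_mat m n" and V: "V \<in> carrier_mat n m"
  shows "det (1\<^sub>m m + U * V) = det (1\<^sub>m n + V * U)"
proof -
  have UV: "U * V \<in> carrier_mat m m" and VU: "V * U \<in> carrier_mat n n" using U V by auto
  define P1 where "P1 = four_block_mat (1\<^sub>m m) (0\<^sub>m m n) V (1\<^sub>m n)"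
  define Q1 where "Q1 = four_block_mat (1\<^sub>m m) (-U) (0\<^sub>m n m) (1\<^sub>m n + V * U)"
  define P2 where "P2 = four_block_mat (1\<^sub>m m) (-U) (0\<^sub>m n m) (1\<^sub>m n)"
  define Q2 where "Q2 = four_block_mat (1\<^sub>m m + U * V) (0\<^sub>m m n) V (1\<^sub>m n)"
  define M where "M = four_block_mat (1\<^sub>m m) (-U) V (1\<^sub>m n)"
  have "P1 * Q1 = four_block_mat (1\<^sub>m m * 1\<^sub>m m + 0\<^sub>m m n * 0\<^sub>m n m) (1\<^sub>m m * (-U) + 0\<^sub>m m n * (1\<^sub>m n + V * U))
       (V * 1\<^sub>m m + 1\<^sub>m n * 0\<^sub>m n m) (V * (-U) + 1\<^sub>m n * (1\<^sub>m n + V * U))"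
    unfolding P1_def Q1_def using U V by (intro mult_four_block_mat) auto
  also have "\<dots> = M" unfolding M_def using U V UV VU
    by (intro arg_cong4[where f=four_block_mat] eq_matI) auto
  finally have 1: "P1 * Q1 = M" .
  have "P2 * Q2 = four_block_mat (1\<^sub>m m * (1\<^sub>m m + U * V) + (-U) * V) (1\<^sub>m m * 0\<^sub>m m n + (-U) * 1\<^sub>m n)
       (0\<^sub>m n m * (1\<^sub>m m + U * V) + 1\<^sub>m n * V) (0\<^sub>m n m * 0\<^sub>m m n + 1\<^sub>m n * 1\<^sub>m n)"
    unfolding P2_def Q2_def using U V by (intro mult_four_block_mat) auto
  also have "\<dots> = M" unfolding M_def using U V UV VU
    by (intro arg_cong4[where f=four_block_mat] eq_matI) auto
  finally have 2: "P2 * Q2 = M" .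
  have c: "P1 \<in> carrier_mat (m+n) (m+n)" "Q1 \<in> carrier_mat (m+n) (m+n)"
     "P2 \<in> carrier_mat (m+n) (m+n)" "Q2 \<in> carrier_mat (m+n) (m+n)"
    unfolding P1_def Q1_def P2_def Q2_def using U V UV VU by auto
  have dP1: "det P1 = 1" unfolding P1_def
    by (subst det_four_block_mat_upper_right_zero[of _ m _ n]) (use V in auto)
  have dQ1: "det Q1 = det (1\<^sub>m n + V * U)" unfolding Q1_def
    by (subst det_four_block_mat_lower_left_zero[of _ m _ n]) (use U VU in auto)
  have dP2: "det P2 = 1" unfolding P2_def
    by (subst det_four_block_mat_lower_left_zero[of _ m _ n]) (use U in auto)
  have dQ2: "det Q2 = det (1\<^sub>m m + U * V)" unfolding Q2_def
    by (subst det_four_block_mat_upper_right_zero[of _ m _ n]) (use V UV in auto)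
  have "det M = det (1\<^sub>m n + V * U)" using det_mult[OF c(1,2)] 1 dP1 dQ1 by simp
  moreover have "det M = det (1\<^sub>m m + U * V)" using det_mult[OF c(3,4)] 2 dP2 dQ2 by simp
  ultimately show ?thesis by simp
qed

lemma det_one_plus_pos:
  fixes W :: "real mat"
  assumes W: "W \<in> carrier_mat N N"
    and psd: "\<And>u. u \<in> carrier_vec N \<Longrightarrow> u \<bullet> (W *\<^sub>v u) \<ge> 0"
    and fpos: "\<And>j. j < N \<Longrightarrow> f j > 0"
  shows "det (1\<^sub>m N + W * mat_diag N f) > 0"
proof -
  define K where "K = W * mat_diag N f"
  have K: "K \<in> carrier_mat N N" unfolding K_def using W by auto
  have Kij: "K $$ (i,j) = W $$ (i,j) * f j" if "i < N" "j < N" for i j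
    unfolding K_def using W that by (simp add: mat_diag_mult_right[OF W])
  have nz: "det (1\<^sub>m N + t \<cdot>\<^sub>m K) \<noteq> 0" if t: "t \<ge> 0" for t
  proof
    assume "det (1\<^sub>m N + t \<cdot>\<^sub>m K) = 0"
    then obtain v where v: "v \<in> carrier_vec N" "v \<noteq> 0\<^sub>v N" "(1\<^sub>m N + t \<cdot>\<^sub>m K) *\<^sub>v v = 0\<^sub>v N"
      using det_0_iff_vec_prod_zero[of "1\<^sub>m N + t \<cdot>\<^sub>m K" N] K by auto
    define w where "w = vec N (\<lambda>j. f j * v $ j)"
    have w: "w \<in> carrier_vec N" unfolding w_def by auto
    have eq: "v $ i = - t * (W *\<^sub>v w) $ i" if i: "i < N" for i
    proof -
      have "0 = ((1\<^sub>m N + t \<cdot>\<^sub>m K) *\<^sub>v v) $ i" using v(3) i by simp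
      also have "\<dots> = (\<Sum>j = 0..<N. (1\<^sub>m N $$ (i,j) + t * K $$ (i,j)) * v $ j)"
        using i K v(1) by (simp add: scalar_prod_def) (intro sum.cong, auto)
      also have "\<dots> = (\<Sum>j = 0..<N. 1\<^sub>m N $$ (i,j) * v $ j) + t * (\<Sum>j = 0..<N. W $$ (i,j) * (f j * v $ j))"
        by (simp add: algebra_simps sum.distrib sum_distrib_left Kij i)
      also have "(\<Sum>j = 0..<N. 1\<^sub>m N $$ (i,j) * v $ j) = v $ i"
        using i by (subst sum.remove[of _ i]) auto
      also have "(\<Sum>j = 0..<N. W $$ (i,j) * (f j * v $ j)) = (W *\<^sub>v w) $ i"
        using i W w unfolding w_def by (simp add: scalar_prod_def)
      finally show ?thesis by simp
    qed
    have "w \<bullet> v = (\<Sum>i = 0..<N. w $ i * (- t * (W *\<^sub>v w) $ i))"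
      unfolding scalar_prod_def using v(1) eq by (intro sum.cong) auto
    also have "\<dots> = - t * (w \<bullet> (W *\<^sub>v w))"
      using W w by (simp add: scalar_prod_def sum_distrib_left algebra_simps)
    also have "\<dots> \<le> 0" using psd[OF w] t by simp
    finally have le: "w \<bullet> v \<le> 0" .
    have wv: "w \<bullet> v = (\<Sum>i = 0..<N. f i * (v $ i)^2)"
      unfolding scalar_prod_def w_def using v(1) by (intro sum.cong) (auto simp: power2_eq_square)
    have nn: "\<And>i. i \<in> {0..<N} \<Longrightarrow> f i * (v $ i)^2 \<ge> 0" by (rule mult_nonneg_nonneg[OF less_imp_le[OF fpos] zero_le_power2]) simp
    have s0: "(\<Sum>i = 0..<N. f i * (v $ i)^2) = 0"
      using le wv sum_nonneg[of "{0..<N}" "\<lambda>i. f i * (v $ i)^2", OF nn] by linarith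
    have "\<forall>i\<in>{0..<N}. f i * (v $ i)^2 = 0"
      using iffD1[OF sum_nonneg_eq_0_iff[of "{0..<N}" "\<lambda>i. f i * (v $ i)^2"] s0] nn by blast
    hence "v = 0\<^sub>v N" using fpos v(1) by (intro eq_vecI) (auto, metis atLeastLessThan_iff less_irrefl zero_le)
    with v(2) show False by simp
  qed
  define g where "g t = (\<Sum>p \<in> {p. p permutes {0..<N}}. signof p *
      (\<Prod>i = 0..<N. (1\<^sub>m N $$ (i, p i) + t * K $$ (i, p i))))" for t :: real
  have gdet: "det (1\<^sub>m N + t \<cdot>\<^sub>m K) = g t" for t
  proof -
    have c: "1\<^sub>m N + t \<cdot>\<^sub>m K \<in> carrier_mat N N" using K by auto
    show ?thesis unfolding det_def'[OF c] g_def
    proof (intro sum.cong refl arg_cong2[where f="(*)"] prod.cong)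
      fix p i assume "p \<in> {p. p permutes {0..<N}}" "i \<in> {0..<N}"
      hence "p i < N" by (auto dest: permutes_in_image)
      thus "(1\<^sub>m N + t \<cdot>\<^sub>m K) $$ (i, p i) = 1\<^sub>m N $$ (i, p i) + t * K $$ (i, p i)"
        using \<open>i \<in> {0..<N}\<close> K by simp
    qed
  qed
  have cont: "continuous_on {0..1} g" unfolding g_def by (intro continuous_intros)
  have "1\<^sub>m N + 0 \<cdot>\<^sub>m K = 1\<^sub>m N" using K by (intro eq_matI) auto
  hence g0: "g 0 = 1" using gdet[of 0] by simp
  have "1 \<cdot>\<^sub>m K = K" using K by (intro eq_matI) auto
  hence g1: "g 1 = det (1\<^sub>m N + K)" using gdet[of 1] by simp
  show ?thesis
  proof (rule ccontr)
    assume "\<not> ?thesis"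
    hence "g 1 \<le> 0" using g1 K_def by simp
    then obtain t where "0 \<le> t" "t \<le> 1" "g t = 0"
      using IVT2'[of g 1 0 0] cont g0 by auto
    with nz[of t] gdet[of t] show False by simp
  qed
qed

lemma psd_gram:
  fixes X :: "real mat"
  assumes X: "X \<in> carrier_mat m N" and u: "u \<in> carrier_vec N"
  shows "u \<bullet> ((transpose_mat X * X) *\<^sub>v u) \<ge> 0"
proof -
  have Xu: "X *\<^sub>v u \<in> carrier_vec m" using X u by auto
  have "u \<bullet> ((transpose_mat X * X) *\<^sub>v u) = u \<bullet> (transpose_mat X *\<^sub>v (X *\<^sub>v u))"
    using X u by simp
  also have "\<dots> = (transpose_mat X *\<^sub>v (X *\<^sub>v u)) \<bullet> u"
    using X u by (intro comm_scalar_prod[of _ N]) auto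
  also have "\<dots> = (X *\<^sub>v u) \<bullet> (X *\<^sub>v u)"
    by (rule transpose_vec_mult_scalar[OF X u Xu])
  also have "\<dots> \<ge> 0" unfolding scalar_prod_def by (intro sum_nonneg) auto
  finally show ?thesis .
qed

lemma minv_props:
  fixes A :: "real mat"
  assumes A: "A \<in> carrier_mat m m" and dA: "det A \<noteq> 0"
  shows "minv A \<in> carrier_mat m m" "A * minv A = 1\<^sub>m m"
proof -
  from det_non_zero_imp_unit[OF A dA, of "()"]
  obtain B where "B \<in> carrier_mat m m" "A * B = 1\<^sub>m m" "B * A = 1\<^sub>m m"
    unfolding Units_def ring_mat_def by auto
  hence ex: "\<exists>B. B \<in> carrier_mat (dim_row A) (dim_row A) \<and> A * B = 1\<^sub>m (dim_row A) \<and> B * A = 1\<^sub>m (dim_row A)"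
    using A by auto
  have "minv A \<in> carrier_mat (dim_row A) (dim_row A) \<and> A * minv A = 1\<^sub>m (dim_row A) \<and> minv A * A = 1\<^sub>m (dim_row A)"
    unfolding minv_def by (rule someI_ex[OF ex])
  thus "minv A \<in> carrier_mat m m" "A * minv A = 1\<^sub>m m" using A by auto
qed

lemma main_alg:
  fixes X Y :: "real mat"
  assumes X: "X \<in> carrier_mat m N" and Y: "Y \<in> carrier_mat d N"
    and fpos: "\<And>j. j < N \<Longrightarrow> f j > 0"
  defines "D \<equiv> mat_diag N f"
  defines "A \<equiv> X * D * transpose_mat X + 1\<^sub>m m"
  shows "det A = det (transpose_mat X * X * D + 1\<^sub>m N)"
    and "det (transpose_mat X * X * D + 1\<^sub>m N) > 0"
    and "det (transpose_mat X * X * D + transpose_mat Y * Y * D + 1\<^sub>m N) > 0"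
    and "det A * det (Y * (D - D * transpose_mat X * minv A * X * D) * transpose_mat Y + 1\<^sub>m d)
         = det (transpose_mat X * X * D + transpose_mat Y * Y * D + 1\<^sub>m N)"
proof -
  define Xt where "Xt = transpose_mat X"
  define Yt where "Yt = transpose_mat Y"
  have Xt: "Xt \<in> carrier_mat N m" and Yt: "Yt \<in> carrier_mat N d" unfolding Xt_def Yt_def using X Y by auto
  have D: "D \<in> carrier_mat N N" unfolding D_def by simp
  have A: "A \<in> carrier_mat m m" unfolding A_def using X Xt D by (simp add: Xt_def[symmetric])
  have XtX: "Xt * X \<in> carrier_mat N N" using Xt X by simp
  have YtY: "Yt * Y \<in> carrier_mat N N" using Yt Y by simp
  define a where "a = det (Xt * X * D + 1\<^sub>m N)"
  have a1: "a = det (1\<^sub>m N + D * (Xt * X))"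
  proof -
    have "a = det (1\<^sub>m N + (Xt * X) * D)" unfolding a_def
      using XtX D by (subst comm_add_mat[of _ N N]) auto
    also have "\<dots> = det (1\<^sub>m N + D * (Xt * X))" by (rule sylvester_det[OF XtX D])
    finally show ?thesis .
  qed
  have dA: "det A = a"
  proof -
    have "A = 1\<^sub>m m + X * (D * Xt)" unfolding A_def Xt_def[symmetric]
      using X D Xt by (subst comm_add_mat[of _ m m]) auto
    hence "det A = det (1\<^sub>m N + (D * Xt) * X)" using sylvester_det[of X m N "D * Xt"] X D Xt by simp
    also have "(D * Xt) * X = D * (Xt * X)" using D Xt X by simp
    finally show ?thesis using a1 by simp
  qed
  thus "det A = det (transpose_mat X * X * D + 1\<^sub>m N)" unfolding a_def Xt_def .
  have apos: "a > 0" unfolding a_def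
    using det_one_plus_pos[OF XtX _ fpos] psd_gram[OF X] XtX D unfolding D_def Xt_def
    by (subst comm_add_mat[of _ N N]) auto
  thus "det (transpose_mat X * X * D + 1\<^sub>m N) > 0" unfolding a_def Xt_def .
  define W where "W = Xt * X + Yt * Y"
  have W: "W \<in> carrier_mat N N" unfolding W_def using XtX YtY by simp
  have WD: "W * D = Xt * X * D + Yt * Y * D" unfolding W_def using XtX YtY D
    by (simp add: add_mult_distrib_mat[of _ N N])
  define b where "b = det (Xt * X * D + Yt * Y * D + 1\<^sub>m N)"
  have b1: "b = det (1\<^sub>m N + W * D)" unfolding b_def WD[symmetric]
    using W D by (subst comm_add_mat[of _ N N]) auto
  have bpos: "b > 0" unfolding b1 D_def
  proof (rule det_one_plus_pos[OF W _ fpos])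
    fix u :: "real vec" assume u: "u \<in> carrier_vec N"
    have "u \<bullet> (W *\<^sub>v u) = u \<bullet> ((Xt * X) *\<^sub>v u) + u \<bullet> ((Yt * Y) *\<^sub>v u)"
      unfolding W_def using XtX YtY u
      by (simp add: add_mult_distrib_mat_vec[of _ N N] scalar_prod_add_distrib[of _ N])
    also have "\<dots> \<ge> 0" using psd_gram[OF X u] psd_gram[OF Y u] unfolding Xt_def Yt_def by simp
    finally show "u \<bullet> (W *\<^sub>v u) \<ge> 0" .
  qed
  thus "det (transpose_mat X * X * D + transpose_mat Y * Y * D + 1\<^sub>m N) > 0" unfolding b_def Xt_def Yt_def .
  have b2: "b = det (1\<^sub>m N + D * W)" unfolding b1 by (rule sylvester_det[OF W D])
  have Ai: "minv A \<in> carrier_mat m m" "A * minv A = 1\<^sub>m m" using minv_props[OF A] dA apos by auto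
  define Ainv where "Ainv = minv A"
  have Ainv: "Ainv \<in> carrier_mat m m" "A * Ainv = 1\<^sub>m m" using Ai unfolding Ainv_def by auto
  define R where "R = D * Xt"
  define S where "S = Ainv * X * D"
  have R: "R \<in> carrier_mat N m" unfolding R_def using D Xt by simp
  have S: "S \<in> carrier_mat m N" unfolding S_def using Ainv X D by simp
  define P where "P = D * Xt * Ainv * X * D"
  define Q where "Q = D * Xt * X"
  have P: "P \<in> carrier_mat N N" and Q: "Q \<in> carrier_mat N N" unfolding P_def Q_def using D Xt Ainv X by auto
  have c1: "D * Xt * Ainv \<in> carrier_mat N m" "D * Xt * Ainv * X \<in> carrier_mat N N"
     "Ainv * X \<in> carrier_mat m N" using D Xt Ainv X by auto
  have PRS: "P = R * S"
  proof -
    have RA: "R * Ainv \<in> carrier_mat N m" using R Ainv(1) by simp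
    have XD: "X * D \<in> carrier_mat m N" using X D by simp
    have "P = ((R * Ainv) * X) * D" unfolding P_def R_def ..
    also have "\<dots> = (R * Ainv) * (X * D)" by (rule assoc_mult_mat[OF RA X D])
    also have "\<dots> = R * (Ainv * (X * D))" by (rule assoc_mult_mat[OF R Ainv(1) XD])
    also have "Ainv * (X * D) = (Ainv * X) * D" by (rule assoc_mult_mat[OF Ainv(1) X D, symmetric])
    finally show ?thesis unfolding S_def .
  qed
  have QRX: "Q = R * X" unfolding Q_def R_def using D Xt X by simp
  have AXR: "A = X * R + 1\<^sub>m m" unfolding A_def R_def Xt_def using X D Xt by simp
  have key: "P + Q * P = Q * D"
  proof -
    have XR: "X * R \<in> carrier_mat m m" using X R by simp
    have RXR: "R * (X * R) \<in> carrier_mat N m" using R XR by simp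
    have RX: "R * X \<in> carrier_mat N N" using R X by simp
    have AiX: "Ainv * X \<in> carrier_mat m N" using Ainv(1) X by simp
    have "R * A * S = (R * (X * R) + R * 1\<^sub>m m) * S"
      unfolding AXR mult_add_distrib_mat[OF R XR one_carrier_mat] ..
    also have "R * 1\<^sub>m m = R" using R by simp
    also have "(R * (X * R) + R) * S = R * (X * R) * S + R * S"
      by (rule add_mult_distrib_mat[OF RXR R S])
    also have "R * (X * R) = (R * X) * R" by (rule assoc_mult_mat[OF R X R, symmetric])
    also have "(R * X) * R * S = (R * X) * (R * S)" by (rule assoc_mult_mat[OF RX R S])
    finally have 1: "R * A * S = Q * P + P" unfolding PRS QRX .
    have "R * A * S = R * (A * ((Ainv * X) * D))" unfolding S_def by (rule assoc_mult_mat[OF R A _]) (use S S_def in simp)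
    also have "A * ((Ainv * X) * D) = (A * (Ainv * X)) * D" by (rule assoc_mult_mat[OF A AiX D, symmetric])
    also have "A * (Ainv * X) = (A * Ainv) * X" by (rule assoc_mult_mat[OF A Ainv(1) X, symmetric])
    also have "(A * Ainv) * X = X" unfolding Ainv(2) using X by simp
    also have "R * (X * D) = (R * X) * D" by (rule assoc_mult_mat[OF R X D, symmetric])
    finally have 2: "R * A * S = Q * D" unfolding QRX .
    have "Q * P + P = P + Q * P" using P Q by (intro comm_add_mat[of _ N N]) auto
    thus ?thesis using 1 2 by simp
  qed
  define C where "C = 1\<^sub>m N + D * Xt * X"
  have C: "C \<in> carrier_mat N N" unfolding C_def using D Xt X by simp
  define M where "M = D - D * Xt * minv A * X * D"
  have MDP: "M = D - P" unfolding M_def P_def Ainv_def ..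
  have Mc: "M \<in> carrier_mat N N" unfolding MDP using D P by (simp add: minus_carrier_mat)
  have CM: "C * M = D"
  proof -
    have "C * M = (1\<^sub>m N + Q) * (D - P)" unfolding C_def Q_def MDP ..
    also have "\<dots> = D + Q * D - (P + Q * P)"
      using Q D P by (simp add: add_mult_distrib_mat[of _ N N] mult_minus_distrib_mat[of _ N N])
    also have "\<dots> = D"
    proof (rule eq_matI)
      fix i j assume ij: "i < dim_row D" "j < dim_col D"
      have "(P + Q * P) $$ (i,j) = (Q * D) $$ (i,j)" using key by simp
      thus "(D + Q * D - (P + Q * P)) $$ (i, j) = D $$ (i, j)"
        using ij D P Q by simp
    qed (use D P Q in auto)
    finally show ?thesis .
  qed
  have dC: "det C = a" unfolding a1 C_def using D Xt X by simp
  define Bm where "Bm = Y * M * Yt + 1\<^sub>m d"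
  have MYt: "M * Yt \<in> carrier_mat N d" using Mc Yt by simp
  have dB: "det Bm = det (1\<^sub>m N + (M * Yt) * Y)"
  proof -
    have "Bm = 1\<^sub>m d + Y * (M * Yt)" unfolding Bm_def using Y Mc Yt
      by (subst comm_add_mat[of _ d d]) auto
    thus ?thesis using sylvester_det[OF Y MYt] by simp
  qed
  have MYY: "M * (Yt * Y) \<in> carrier_mat N N" using Mc YtY by simp
  have "C * (1\<^sub>m N + (M * Yt) * Y) = C * (1\<^sub>m N + M * (Yt * Y))"
    using assoc_mult_mat[OF Mc Yt Y] by simp
  also have "\<dots> = C * 1\<^sub>m N + C * (M * (Yt * Y))" by (rule mult_add_distrib_mat[OF C one_carrier_mat MYY])
  also have "C * (M * (Yt * Y)) = (C * M) * (Yt * Y)" by (rule assoc_mult_mat[OF C Mc YtY, symmetric])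
  also have "C * 1\<^sub>m N = C" using C by simp
  also note CM
  also have "C + D * (Yt * Y) = 1\<^sub>m N + (D * (Xt * X) + D * (Yt * Y))"
    unfolding C_def using assoc_mult_mat[OF D Xt X] assoc_add_mat[of "1\<^sub>m N" N N "D * (Xt * X)" "D * (Yt * Y)"] D XtX YtY by simp
  also have "D * (Xt * X) + D * (Yt * Y) = D * W" unfolding W_def by (rule mult_add_distrib_mat[OF D XtX YtY, symmetric])
  finally have "det C * det (1\<^sub>m N + (M * Yt) * Y) = b"
    unfolding b2 using det_mult[OF C, of "1\<^sub>m N + (M * Yt) * Y"] MYt Y by simp
  thus "det A * det (Y * (D - D * transpose_mat X * minv A * X * D) * transpose_mat Y + 1\<^sub>m d)
         = det (transpose_mat X * X * D + transpose_mat Y * Y * D + 1\<^sub>m N)"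
    using dB unfolding b_def dA dC[symmetric] Bm_def M_def Xt_def Yt_def by simp
qed

lemma powr_arith:
  fixes a b e lam :: real
  assumes a: "a > 0" and b: "b > 0" and e: "e > 0"
  shows "1 / (a powr (e / 2) * (b / a) powr ((1 + lam) / 2)) =
         (a powr (1 - (1 + lam) / e) * b powr ((1 + lam) / e)) powr (- e / 2)"
proof -
  have "(a powr (1 - (1 + lam) / e) * b powr ((1 + lam) / e)) powr (- e / 2)
      = a powr ((1 - (1 + lam) / e) * (- e / 2)) * b powr (((1 + lam) / e) * (- e / 2))"
    using a b by (simp add: powr_mult powr_powr)
  also have "(1 - (1 + lam) / e) * (- e / 2) = (1 + lam) / 2 - e / 2" using e by (simp add: field_simps)
  also have "((1 + lam) / e) * (- e / 2) = - ((1 + lam) / 2)" using e by (simp add: field_simps)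
  finally have R0: "(a powr (1 - (1 + lam) / e) * b powr ((1 + lam) / e)) powr (- e / 2) =
     a powr ((1 + lam) / 2 - e / 2) * b powr (- ((1 + lam) / 2))" .
  have R: "(a powr (1 - (1 + lam) / e) * b powr ((1 + lam) / e)) powr (- e / 2) =
     a powr ((1 + lam) / 2) / a powr (e / 2) / b powr ((1 + lam) / 2)"
  proof -
    have h1: "a powr ((1 + lam) / 2 - e / 2) = a powr ((1 + lam) / 2) / a powr (e / 2)" by (rule powr_diff)
    have h2: "b powr (- ((1 + lam) / 2)) = inverse (b powr ((1 + lam) / 2))" by (rule powr_minus)
    show ?thesis unfolding R0 h1 h2 by (simp only: divide_inverse)
  qed
  have L: "(b / a) powr ((1 + lam) / 2) = b powr ((1 + lam) / 2) / a powr ((1 + lam) / 2)"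
    by (rule powr_divide)
  have gen: "\<And>A B C :: real. A > 0 \<Longrightarrow> B > 0 \<Longrightarrow> C > 0 \<Longrightarrow> 1 / (A * (B / C)) = C / A / B"
    by (simp add: field_simps)
  show ?thesis unfolding R L by (rule gen) (use a b in auto)
qed

theorem proposition1:
  fixes d p n n' :: nat and lam :: real and x x' :: "nat \<Rightarrow> real vec"
  assumes "d \<ge> 1" and "p \<ge> 1" and "lam > 0"
    and "p < n" and "p < n'"
    and "\<And>i. 1 \<le> i \<Longrightarrow> i \<le> n \<Longrightarrow> dim_vec (x i) = d"
    and "\<And>i. 1 \<le> i \<Longrightarrow> i \<le> n' \<Longrightarrow> dim_vec (x' i) = d"
  shows "let N = n + n' - 2 * p;
             XX = hcat (lag_mat d p n x) (lag_mat d p n' x');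
             YY = hcat (resp_mat d p n x) (resp_mat d p n' x');
             D = Delta_mat p n n';
             \<alpha> = (1 + lam) / real d
         in ar_kernel d p lam n x n' x' =
            (det (transpose_mat XX * XX * D + 1\<^sub>m N) powr (1 - \<alpha>) *
             det (transpose_mat XX * XX * D + transpose_mat YY * YY * D + 1\<^sub>m N) powr \<alpha>)
              powr (- real d / 2)"
proof -
  define N where "N = n + n' - 2 * p"
  define XX where "XX = hcat (lag_mat d p n x) (lag_mat d p n' x')"
  define YY where "YY = hcat (resp_mat d p n x) (resp_mat d p n' x')"
  define f where "f = (\<lambda>j. if j < n - p then 1 / (2 * real (n - p)) else 1 / (2 * real (n' - p)))"
  have NN: "(n - p) + (n' - p) = N" unfolding N_def using assms(4,5) by simp
  have XX: "XX \<in> carrier_mat (p * d) N" unfolding XX_def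
    unfolding carrier_mat_def hcat_def lag_mat_def dim_row_mat dim_col_mat using NN by simp
  have YY: "YY \<in> carrier_mat d N" unfolding YY_def
    unfolding carrier_mat_def hcat_def resp_mat_def dim_row_mat dim_col_mat using NN by simp
  have Dm: "Delta_mat p n n' = mat_diag N f" unfolding Delta_mat_def N_def f_def ..
  have fpos: "f j > 0" if "j < N" for j unfolding f_def using assms(4,5) by auto
  note R = main_alg[of XX "p * d" N YY d f, OF XX YY fpos, folded Dm]
  define A where "A = XX * Delta_mat p n n' * transpose_mat XX + 1\<^sub>m (p * d)"
  define a where "a = det (transpose_mat XX * XX * Delta_mat p n n' + 1\<^sub>m N)"
  define b where "b = det (transpose_mat XX * XX * Delta_mat p n n' + transpose_mat YY * YY * Delta_mat p n n' + 1\<^sub>m N)"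
  define B where "B = det (YY * (Delta_mat p n n' - Delta_mat p n n' * transpose_mat XX * minv A * XX * Delta_mat p n n') * transpose_mat YY + 1\<^sub>m d)"
  have dA: "det A = a" using R(1) unfolding A_def a_def .
  have apos: "a > 0" using R(2) unfolding a_def .
  have bpos: "b > 0" using R(3) unfolding b_def .
  have "a * B = b" using R(4) unfolding A_def[symmetric] B_def b_def dA .
  hence B: "B = b / a" using apos by (simp add: field_simps)
  have e: "real d > 0" using assms(1) by simp
  have "ar_kernel d p lam n x n' x' = 1 / (a powr (real d / 2) * (b / a) powr ((1 + lam) / 2))"
    unfolding ar_kernel_def Let_def XX_def[symmetric] YY_def[symmetric] A_def[symmetric]
      B_def[symmetric] dA B[symmetric] ..
  also have "\<dots> = (a powr (1 - (1 + lam) / real d) * b powr ((1 + lam) / real d)) powr (- real d / 2)"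
    by (rule powr_arith[OF apos bpos e])
  finally show ?thesis unfolding Let_def N_def[symmetric] XX_def[symmetric] YY_def[symmetric] a_def b_def .
qed

end
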